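(* Let $\gamma > \sqrt{2}$ and let $I$ be a $\gamma$-stable instance of the Euclidean Steiner tree problem with optimal Steiner tree $\mathrm{OPT}$. Then every Steiner point that is a vertex of $\mathrm{OPT}$ has degree in $\mathrm{OPT}$ at most $\frac{-2}{2 - \gamma^2}$.
   Context: An instance of the Euclidean Steiner tree problem consists of a finite set $V \subset \mathbb{R}^d$, a set $T \subseteq V$ of terminals, and the complete graph on $V$ with edge weights $w_{uv} = \|u - v\|$. Points of $V \setminus T$ are Steiner points. A Steiner tree is a tree in this complete graph whose vertex set contains all of $T$; its weight is the sum of its edge weights. For $\gamma > 1$, the instance is $\gamma$-stable if it has a minimum-weight Steiner tree $\mathrm{OPT}$ such that for every $w' : V \times V \to \mathbb{R}_{\ge 0}$ with $w_{uv} \le w'_{uv} \le \gamma w_{uv}$ for all $u,v$, every minimum-weight Steiner tree with respect to $w'$ equals $\mathrm{OPT}$ (the $w'$ need not be Euclidean). *)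

theory Defs
  imports "HOL-Analysis.Analysis"
begin

definition complete_edges :: "'a set \<Rightarrow> 'a set set" where
  "complete_edges S = {{u, v} | u v. u \<in> S \<and> v \<in> S \<and> u \<noteq> v}"

definition adj :: "'a set set \<Rightarrow> ('a \<times> 'a) set" where
  "adj E = {(x, y). {x, y} \<in> E}"

definition is_tree :: "'a set \<Rightarrow> 'a set set \<Rightarrow> bool" where
  "is_tree S E \<longleftrightarrow> finite S \<and> S \<noteq> {} \<and> E \<subseteq> complete_edges S \<and>
     (\<forall>u\<in>S. \<forall>v\<in>S. (u, v) \<in> (adj E)\<^sup>*) \<and> card E = card S - 1"

definition steiner_tree :: "'a set \<Rightarrow> 'a set \<Rightarrow> 'a set \<times> 'a set set \<Rightarrow> bool" where
  "steiner_tree V T X \<longleftrightarrow> T \<subseteq> fst X \<and> fst X \<subseteq> V \<and> is_tree (fst X) (snd X)"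

definition tree_weight :: "('a set \<Rightarrow> real) \<Rightarrow> 'a set \<times> 'a set set \<Rightarrow> real" where
  "tree_weight c X = (\<Sum>e\<in>snd X. c e)"

definition min_steiner ::
  "'a set \<Rightarrow> 'a set \<Rightarrow> ('a set \<Rightarrow> real) \<Rightarrow> 'a set \<times> 'a set set \<Rightarrow> bool" where
  "min_steiner V T c X \<longleftrightarrow> steiner_tree V T X \<and>
     (\<forall>Y. steiner_tree V T Y \<longrightarrow> tree_weight c X \<le> tree_weight c Y)"

definition edge_len :: "'a::euclidean_space set \<Rightarrow> real" where
  "edge_len e = (SOME d. \<exists>u v. e = {u, v} \<and> d = dist u v)"

definition gamma_stable ::
  "real \<Rightarrow> 'a::euclidean_space set \<Rightarrow> 'a set \<Rightarrow> 'a set \<times> 'a set set \<Rightarrow> bool" where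
  "gamma_stable \<gamma> V T OPT \<longleftrightarrow> min_steiner V T edge_len OPT \<and>
     (\<forall>c. (\<forall>e\<in>complete_edges V. edge_len e \<le> c e \<and> c e \<le> \<gamma> * edge_len e) \<longrightarrow>
          (\<forall>Y. min_steiner V T c Y \<longrightarrow> Y = OPT))"

definition tree_degree :: "'a set set \<Rightarrow> 'a \<Rightarrow> nat" where
  "tree_degree E v = card {e \<in> E. v \<in> e}"

end

theory Submission
  imports Defs
begin

lemma edge_len_eq: "edge_len {x, y} = dist x y"
proof -
  have "\<exists>u w. {x,y} = {u,w} \<and> edge_len {x,y} = dist u w"
    unfolding edge_len_def
    by (rule someI_ex[of "\<lambda>d. \<exists>u w. {x,y} = {u,w} \<and> d = dist u w"]) blast
  then obtain u w where "{x,y} = {u,w}" "edge_len {x,y} = dist u w" by blast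
  then show ?thesis by (auto simp: doubleton_eq_iff dist_commute)
qed

lemma adj_sym: "(x,y) \<in> (adj F)\<^sup>* \<Longrightarrow> (y,x) \<in> (adj F)\<^sup>*"
proof (induction rule: rtrancl_induct)
  case base then show ?case by simp
next
  case (step y z)
  have "(z,y) \<in> adj F" using step(2) by (simp add: adj_def insert_commute)
  then show ?case using step(3) by (rule converse_rtrancl_into_rtrancl)
qed

lemma conn_card:
  assumes "finite S" "finite F" "r \<in> S" "\<forall>x\<in>S. (x,r) \<in> (adj F)\<^sup>*"
  shows "card S \<le> card F + 1"
proof -
  define d where "d x = (LEAST n. (x,r) \<in> (adj F)^^n)" for x
  have step: "\<exists>y. (x,y) \<in> adj F \<and> d y < d x" if "x \<in> S" "x \<noteq> r" for x
  proof -
    from assms(4) that(1) have "(x,r) \<in> (adj F)\<^sup>*" by blast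
    then obtain n where "(x,r) \<in> (adj F)^^n" using rtrancl_power by blast
    hence dx: "(x,r) \<in> (adj F)^^(d x)" unfolding d_def by (rule LeastI)
    have "d x \<noteq> 0"
    proof
      assume "d x = 0"
      then show False using dx that(2) by simp
    qed
    then obtain n' where n': "d x = Suc n'" by (cases "d x") auto
    with dx obtain y where y: "(x,y) \<in> adj F" "(y,r) \<in> (adj F)^^n'"
      using relpow_Suc_D2 by fastforce
    have "d y \<le> n'" unfolding d_def using y(2) by (rule Least_le)
    then show ?thesis using n' y(1) by auto
  qed
  define p where "p x = (SOME y. (x,y) \<in> adj F \<and> d y < d x)" for x
  have pp: "(x, p x) \<in> adj F \<and> d (p x) < d x" if "x \<in> S" "x \<noteq> r" for x
    unfolding p_def using step[OF that] by (rule someI_ex)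
  have inj: "inj_on (\<lambda>x. {x, p x}) (S - {r})"
  proof (rule inj_onI)
    fix x y assume x: "x \<in> S - {r}" and y: "y \<in> S - {r}" and eq: "{x, p x} = {y, p y}"
    show "x = y"
    proof (rule ccontr)
      assume "x \<noteq> y"
      with eq have "x = p y" "y = p x" by (auto simp: doubleton_eq_iff)
      have d1: "d (p y) < d y" using pp[of y] y by blast
      have d2: "d (p x) < d x" using pp[of x] x by blast
      have "d x < d y" using d1 \<open>x = p y\<close> by metis
      moreover have "d y < d x" using d2 \<open>y = p x\<close> by metis
      ultimately show False by simp
    qed
  qed
  have sub: "(\<lambda>x. {x, p x}) ` (S - {r}) \<subseteq> F" using pp by (auto simp: adj_def)
  have "card (S - {r}) \<le> card F" using card_inj_on_le[OF inj sub assms(2)] .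
  moreover have "card S = card (S - {r}) + 1" using assms(1,3)
    by (metis Suc_eq_plus1 card_Suc_Diff1)
  ultimately show ?thesis by simp
qed

lemma geo:
  fixes N :: "'a::real_inner set"
  assumes "finite N" "N \<noteq> {}" "v \<notin> N"
  shows "\<exists>m\<in>N. (\<Sum>u\<in>N. dist m u) \<le> sqrt 2 * (\<Sum>u\<in>N. dist u v)"
proof (rule ccontr)
  assume H: "\<not> ?thesis"
  define a where "a u = dist u v" for u
  define A where "A = (\<Sum>u\<in>N. a u)"
  define Hs where "Hs = (\<Sum>u\<in>N. 1 / a u)"
  define F where "F m = (\<Sum>u\<in>N. (dist m u)^2 / a u)" for m
  have apos: "a u > 0" if "u \<in> N" for u using assms(3) that unfolding a_def by auto
  have s2: "sqrt 2 * sqrt 2 = (2::real)" by simp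
  have s2p: "sqrt 2 > (0::real)" by simp
  have pw: "dist m u \<le> (dist m u)^2 / a u / (2 * sqrt 2) + a u / sqrt 2" if "u\<in>N" for m u
  proof -
    have au: "a u > 0" using apos that .
    have "0 \<le> (dist m u - sqrt 2 * a u)^2" by simp
    hence "2 * sqrt 2 * a u * dist m u \<le> (dist m u)^2 + 2 * (a u)^2"
      by (simp add: power2_eq_square algebra_simps s2)
    moreover have "(dist m u)^2 / a u / (2 * sqrt 2) + a u / sqrt 2 = ((dist m u)^2 + 2 * (a u)^2) / (2 * sqrt 2 * a u)"
      using au s2p by (simp add: field_simps power2_eq_square)
    ultimately show ?thesis using au s2p by (simp add: pos_le_divide_eq algebra_simps)
  qed
  have Fbig: "F m > 2 * A" if "m \<in> N" for m
  proof -
    have "sqrt 2 * A < (\<Sum>u\<in>N. dist m u)" using H that unfolding A_def a_def by (auto simp: not_le)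
    also have "\<dots> \<le> (\<Sum>u\<in>N. (dist m u)^2 / a u / (2 * sqrt 2) + a u / sqrt 2)"
      by (rule sum_mono) (use pw in auto)
    also have "\<dots> = F m / (2 * sqrt 2) + A / sqrt 2"
      by (simp add: F_def A_def sum.distrib sum_divide_distrib)
    finally have "sqrt 2 * A < F m / (2 * sqrt 2) + A / sqrt 2" .
    moreover have "F m / (2 * sqrt 2) + A / sqrt 2 = (F m + 2 * A) / (2 * sqrt 2)"
      using s2p by (simp add: field_simps)
    ultimately have "sqrt 2 * A * (2 * sqrt 2) < F m + 2 * A"
      using s2p by (simp add: pos_less_divide_eq)
    moreover have "sqrt 2 * A * (2 * sqrt 2) = 2 * A * (sqrt 2 * sqrt 2)" by (simp only: ac_simps)
    ultimately have "4 * A < F m + 2 * A" using s2 by simp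
    then show ?thesis by simp
  qed
  have "(\<Sum>m\<in>N. 2*A / a m) < (\<Sum>m\<in>N. F m / a m)"
    by (rule sum_strict_mono) (auto simp: assms Fbig apos divide_strict_right_mono)
  moreover have "(\<Sum>m\<in>N. F m / a m) \<le> (\<Sum>m\<in>N. 2*A / a m)"
  proof -
    define x where "x u = (1 / a u) *\<^sub>R (u - v)" for u
    have key: "(dist m u)^2 / a u / a m = a m / a u + a u / a m - 2 * inner (x m) (x u)"
      if "m\<in>N" "u\<in>N" for m u
    proof -
      have am: "a m > 0" and au: "a u > 0" using apos that by auto
      have "(dist m u)^2 = (a m)^2 + (a u)^2 - 2 * inner (m - v) (u - v)"
      proof -
        have "dist m u = norm ((m - v) - (u - v))" by (simp add: dist_norm)
        hence "(dist m u)^2 = inner ((m - v) - (u - v)) ((m - v) - (u - v))"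
          by (simp add: power2_norm_eq_inner)
        also have "\<dots> = inner (m - v) (m - v) + inner (u - v) (u - v) - 2 * inner (m - v) (u - v)"
          by (simp add: inner_diff_left inner_diff_right inner_commute)
        also have "\<dots> = (a m)^2 + (a u)^2 - 2 * inner (m - v) (u - v)"
          by (simp add: a_def dist_norm power2_norm_eq_inner)
        finally show ?thesis .
      qed
      moreover have "inner (x m) (x u) = inner (m - v) (u - v) / (a m * a u)"
        by (simp add: x_def)
      ultimately show ?thesis using am au by (simp add: field_simps power2_eq_square)
    qed
    have "(\<Sum>m\<in>N. F m / a m) = (\<Sum>m\<in>N. \<Sum>u\<in>N. a m / a u + a u / a m - 2 * inner (x m) (x u))"
      unfolding F_def sum_divide_distrib by (intro sum.cong refl key; assumption)
    also have "\<dots> = (\<Sum>m\<in>N. \<Sum>u\<in>N. a m / a u) + (\<Sum>m\<in>N. \<Sum>u\<in>N. a u / a m)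
        - 2 * inner (\<Sum>m\<in>N. x m) (\<Sum>u\<in>N. x u)"
      by (simp add: sum.distrib sum_subtractf sum_distrib_left inner_sum_left inner_sum_right) (rule sum.swap)
    also have "\<dots> \<le> (\<Sum>m\<in>N. \<Sum>u\<in>N. a m / a u) + (\<Sum>m\<in>N. \<Sum>u\<in>N. a u / a m)"
      by simp
    also have "\<dots> = (\<Sum>m\<in>N. 2*A / a m)"
    proof -
      have e1: "(\<Sum>m\<in>N. \<Sum>u\<in>N. a m / a u) = (\<Sum>m\<in>N. A / a m)"
        by (subst sum.swap) (simp add: A_def sum_divide_distrib)
      have e2: "(\<Sum>m\<in>N. \<Sum>u\<in>N. a u / a m) = (\<Sum>m\<in>N. A / a m)"
        by (simp add: A_def sum_divide_distrib)
      have e3: "(\<Sum>m\<in>N. 2*A / a m) = 2 * (\<Sum>m\<in>N. A / a m)"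
        by (simp add: sum_distrib_left)
      show ?thesis using e1 e2 e3 by linarith
    qed
    finally show ?thesis .
  qed
  ultimately show False by simp
qed


lemma finite_complete_edges: "finite S \<Longrightarrow> finite (complete_edges S)"
proof -
  assume "finite S"
  moreover have "complete_edges S \<subseteq> Pow S" by (auto simp: complete_edges_def)
  ultimately show ?thesis by (meson finite_Pow_iff finite_subset)
qed

lemma complete_edges_mono: "A \<subseteq> B \<Longrightarrow> complete_edges A \<subseteq> complete_edges B"
  by (auto simp: complete_edges_def)

theorem mainTheorem12:
  fixes V T :: "'a::euclidean_space set" and S :: "'a set" and E :: "'a set set"
    and \<gamma> :: real
  assumes "finite V" and "T \<subseteq> V"
    and "\<gamma> > sqrt 2"
    and "gamma_stable \<gamma> V T (S, E)"
    and "v \<in> S" and "v \<in> V - T"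
  shows "real (tree_degree E v) \<le> -2 / (2 - \<gamma>^2)"
proof -
  have s2p: "sqrt 2 > (0::real)" by simp
  have g0: "\<gamma> > 0" using assms(3) s2p by linarith
  have "sqrt 2 \<ge> (1::real)" by simp
  hence g1: "\<gamma> \<ge> 1" using assms(3) by linarith
  have "sqrt 2 ^ 2 < \<gamma> ^ 2" using assms(3) s2p by (intro power_strict_mono) auto
  hence g2: "\<gamma>^2 > 2" by simp
  have rhs: "-2 / (2 - \<gamma>^2) > 0" using g2 by (intro divide_neg_neg) auto
  have "tree_degree E v = 0"
  proof (rule ccontr)
    assume k0: "tree_degree E v \<noteq> 0"
    from assms(4) have ms: "min_steiner V T edge_len (S,E)"
      and stab: "\<And>c. (\<forall>e\<in>complete_edges V. edge_len e \<le> c e \<and> c e \<le> \<gamma> * edge_len e) \<Longrightarrow>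
          (\<forall>Y. min_steiner V T c Y \<longrightarrow> Y = (S,E))"
      unfolding gamma_stable_def by blast+
    have st: "steiner_tree V T (S,E)" using ms by (simp add: min_steiner_def)
    hence TS: "T \<subseteq> S" and SV: "S \<subseteq> V" and tr: "is_tree S E" by (simp_all add: steiner_tree_def)
    from tr have finS: "finite S" and Esub: "E \<subseteq> complete_edges S"
      and conn: "\<forall>u\<in>S. \<forall>w\<in>S. (u,w) \<in> (adj E)\<^sup>*" and cardE: "card E = card S - 1"
      by (simp_all add: is_tree_def)
    have finE: "finite E" using finite_complete_edges[OF finS] Esub finite_subset by blast
    define N where "N = {u. {v,u} \<in> E}"
    define Ev where "Ev = {e\<in>E. v \<in> e}"
    have Ev_eq: "Ev = (\<lambda>u. {v,u}) ` N"
    proof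
      show "Ev \<subseteq> (\<lambda>u. {v,u}) ` N"
      proof
        fix e assume "e \<in> Ev"
        hence eE: "e \<in> E" and ve: "v \<in> e" by (auto simp: Ev_def)
        then obtain x y where "e = {x,y}" using Esub by (auto simp: complete_edges_def)
        with ve have "e = {v, (if x = v then y else x)}" by auto
        with eE show "e \<in> (\<lambda>u. {v,u}) ` N" by (auto simp: N_def)
      qed
      show "(\<lambda>u. {v,u}) ` N \<subseteq> Ev" by (auto simp: N_def Ev_def)
    qed
    have NS: "N \<subseteq> S - {v}"
    proof
      fix u assume "u \<in> N"
      hence "{v,u} \<in> complete_edges S" using Esub by (auto simp: N_def)
      then obtain x y where "{v,u} = {x,y}" "x \<in> S" "y \<in> S" "x \<noteq> y"
        by (auto simp: complete_edges_def)
      then show "u \<in> S - {v}" by (auto simp: doubleton_eq_iff)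
    qed
    have finN: "finite N" using NS finS finite_subset by blast
    have injN: "inj_on (\<lambda>u. {v,u}) N" by (auto simp: inj_on_def doubleton_eq_iff)
    have cardEv: "card Ev = tree_degree E v" by (simp add: Ev_def tree_degree_def)
    have cardN: "card N = tree_degree E v" using cardEv Ev_eq card_image[OF injN] by simp
    have Nne: "N \<noteq> {}" using cardN k0 by auto
    have vN: "v \<notin> N" using NS by auto
    obtain m where mN: "m \<in> N" and geom: "(\<Sum>u\<in>N. dist m u) \<le> sqrt 2 * (\<Sum>u\<in>N. dist u v)"
      using geo[OF finN Nne vN] by blast
    define S' where "S' = S - {v}"
    define Q where "Q = (\<lambda>u. {m,u}) ` (N - {m})"
    define E' where "E' = (E - Ev) \<union> Q"
    define c where "c e = (if v \<in> e then \<gamma> * edge_len e else edge_len e)" for e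
    have mS': "m \<in> S'" using mN NS S'_def by auto
    have finS': "finite S'" using finS S'_def by simp
    have finQ: "finite Q" using finN Q_def by simp
    have finE': "finite E'" using finE finQ E'_def by simp
    have Ev_sub: "Ev \<subseteq> E" by (auto simp: Ev_def)
    have E'_sub: "E' \<subseteq> complete_edges S'"
    proof
      fix e assume "e \<in> E'"
      then consider "e \<in> E" "v \<notin> e" | "e \<in> Q" by (auto simp: E'_def Ev_def)
      then show "e \<in> complete_edges S'"
      proof cases
        case 1
        have "e \<in> complete_edges S" using Esub 1 by blast
        then obtain x y where "e = {x,y}" "x \<in> S" "y \<in> S" "x \<noteq> y"
          by (auto simp: complete_edges_def)
        with 1 show ?thesis by (auto simp: complete_edges_def S'_def)
      next
        case 2
        then obtain u where u: "u \<in> N - {m}" "e = {m,u}" by (auto simp: Q_def)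
        have "u \<in> S'" using NS u(1) by (auto simp: S'_def)
        moreover have "m \<noteq> u" using u(1) by auto
        ultimately show ?thesis using mS' u(2) unfolding complete_edges_def by blast
      qed
    qed
    have reach: "z = v \<or> (m,z) \<in> (adj E')\<^sup>*" if "(m,z) \<in> (adj E)\<^sup>*" for z
      using that
    proof (induction rule: rtrancl_induct)
      case base then show ?case by simp
    next
      case (step y z)
      have yz: "{y,z} \<in> E" using step(2) by (simp add: adj_def)
      show ?case
      proof (cases "z = v")
        case True then show ?thesis by simp
      next
        case zv: False
        show ?thesis
        proof (cases "y = v")
          case True
          hence "z \<in> N" using yz by (simp add: N_def)
          show ?thesis
          proof (cases "z = m")
            case True then show ?thesis by simp
          next
            case False
            with \<open>z \<in> N\<close> have "{m,z} \<in> E'" by (auto simp: E'_def Q_def)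
            hence "(m,z) \<in> adj E'" by (simp add: adj_def)
            then show ?thesis by (simp add: r_into_rtrancl)
          qed
        next
          case False
          with step(3) have "(m,y) \<in> (adj E')\<^sup>*" by simp
          moreover have "{y,z} \<in> E'" using yz False zv by (auto simp: E'_def Ev_def)
          hence "(y,z) \<in> adj E'" by (simp add: adj_def)
          ultimately show ?thesis by (meson rtrancl_into_rtrancl)
        qed
      qed
    qed
    have connm: "(m,x) \<in> (adj E')\<^sup>*" if "x \<in> S'" for x
    proof -
      have "(m,x) \<in> (adj E)\<^sup>*" using conn mS' that by (auto simp: S'_def)
      with reach that show ?thesis by (auto simp: S'_def)
    qed
    have conn': "\<forall>u\<in>S'. \<forall>w\<in>S'. (u,w) \<in> (adj E')\<^sup>*"
      using connm adj_sym rtrancl_trans by metis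
    have card_lo: "card S' \<le> card E' + 1"
      using conn_card[OF finS' finE' mS'] conn' mS' by blast
    have card_up: "card E' \<le> card S' - 1"
    proof -
      have a1: "card E' \<le> card (E - Ev) + card Q" unfolding E'_def by (rule card_Un_le)
      have a2: "card (E - Ev) = card E - card Ev"
        using Ev_sub finE by (simp add: card_Diff_subset finite_subset)
      have a3: "card Q \<le> card (N - {m})" unfolding Q_def by (rule card_image_le) (use finN in simp)
      have a3': "card (N - {m}) = card N - 1" using mN finN by simp
      have a4: "card Ev \<le> card E" using Ev_sub finE by (simp add: card_mono)
      have a5: "card S' = card S - 1" using assms(5) finS by (simp add: S'_def)
      show ?thesis using a1 a2 a3 a3' a4 a5 cardE cardEv cardN k0 by linarith
    qed
    have cardE': "card E' = card S' - 1" using card_lo card_up by linarith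
    have treeY: "is_tree S' E'" unfolding is_tree_def
      using finS' mS' E'_sub conn' cardE' by blast
    have stY: "steiner_tree V T (S', E')" unfolding steiner_tree_def
      using treeY TS SV assms(6) by (auto simp: S'_def)
    have len_nn: "edge_len e \<ge> 0" if "e \<in> complete_edges W" for e W
      using that by (auto simp: complete_edges_def edge_len_eq)
    have cbd: "\<forall>e\<in>complete_edges V. edge_len e \<le> c e \<and> c e \<le> \<gamma> * edge_len e"
    proof
      fix e assume "e \<in> complete_edges V"
      hence "edge_len e \<ge> 0" by (rule len_nn)
      then show "edge_len e \<le> c e \<and> c e \<le> \<gamma> * edge_len e" using g1
        by (auto simp: c_def mult_le_cancel_right1 mult_right_mono)
    qed
    have uniq: "\<And>Y. min_steiner V T c Y \<Longrightarrow> Y = (S,E)" using stab[OF cbd] by blast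
    define Ts where "Ts = {Y. steiner_tree V T Y}"
    have finTs: "finite Ts"
    proof -
      have "Ts \<subseteq> Pow V \<times> Pow (complete_edges V)"
      proof
        fix Y assume "Y \<in> Ts"
        hence "fst Y \<subseteq> V" "snd Y \<subseteq> complete_edges (fst Y)"
          by (auto simp: Ts_def steiner_tree_def is_tree_def)
        then show "Y \<in> Pow V \<times> Pow (complete_edges V)"
          using complete_edges_mono by (cases Y) fastforce
      qed
      moreover have "finite (Pow V \<times> Pow (complete_edges V))"
        using assms(1) finite_complete_edges by blast
      ultimately show ?thesis by (rule finite_subset)
    qed
    have "(S,E) \<in> Ts" using st by (simp add: Ts_def)
    hence Wne: "tree_weight c ` Ts \<noteq> {}" by blast
    have finW: "finite (tree_weight c ` Ts)" using finTs by simp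
    obtain Y0 where Y0: "Y0 \<in> Ts" "tree_weight c Y0 = Min (tree_weight c ` Ts)"
      using Min_in[OF finW Wne] by auto
    have "min_steiner V T c Y0"
      unfolding min_steiner_def using Y0 finW by (auto simp: Ts_def)
    hence "Y0 = (S,E)" by (rule uniq)
    hence optmin: "tree_weight c (S,E) \<le> tree_weight c Y" if "steiner_tree V T Y" for Y
      using Y0 finW that by (auto simp: Ts_def)
    have strict: "tree_weight c (S,E) < tree_weight c (S',E')"
    proof (rule ccontr)
      assume "\<not> ?thesis"
      hence "tree_weight c (S',E') \<le> tree_weight c (S,E)" by simp
      hence "min_steiner V T c (S',E')" using stY optmin unfolding min_steiner_def by fastforce
      hence "(S',E') = (S,E)" by (rule uniq)
      then show False using assms(5) by (auto simp: S'_def)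
    qed
    have cnn: "c e \<ge> 0" if "e \<in> complete_edges W" for e W
      using len_nn[OF that] g0 by (simp add: c_def)
    have w1: "tree_weight c (S,E) = (\<Sum>e\<in>E - Ev. c e) + (\<Sum>e\<in>Ev. c e)"
      unfolding tree_weight_def using sum.subset_diff[OF Ev_sub finE] by simp
    have w2: "(\<Sum>e\<in>Ev. c e) = \<gamma> * (\<Sum>u\<in>N. dist v u)"
      unfolding Ev_eq by (simp add: sum.reindex[OF injN] c_def edge_len_eq sum_distrib_left)
    have w3: "tree_weight c (S',E') \<le> (\<Sum>e\<in>E - Ev. c e) + (\<Sum>e\<in>Q. c e)"
    proof -
      have "(\<Sum>e\<in>(E - Ev) \<inter> Q. c e) \<ge> 0"
        by (rule sum_nonneg) (use E'_sub cnn in \<open>auto simp: E'_def\<close>)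
      then show ?thesis unfolding tree_weight_def E'_def
        using sum_Un[of "E - Ev" Q c] finE finQ by simp
    qed
    have w4: "(\<Sum>e\<in>Q. c e) \<le> (\<Sum>u\<in>N. dist m u)"
    proof -
      have "(\<Sum>e\<in>Q. c e) = (\<Sum>e\<in>Q. edge_len e)"
        using NS mS' by (intro sum.cong refl) (auto simp: Q_def c_def S'_def)
      also have "\<dots> \<le> (\<Sum>u\<in>N - {m}. edge_len {m,u})"
        unfolding Q_def using sum_image_le[of "N - {m}" edge_len "\<lambda>u. {m,u}"] finN
        by (simp add: edge_len_eq o_def)
      also have "\<dots> = (\<Sum>u\<in>N - {m}. dist m u)" by (simp add: edge_len_eq)
      also have "\<dots> \<le> (\<Sum>u\<in>N. dist m u)" by (rule sum_mono2) (use finN in auto)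
      finally show ?thesis .
    qed
    have P: "(\<Sum>u\<in>N. dist v u) = (\<Sum>u\<in>N. dist u v)" by (simp add: dist_commute)
    have Ppos: "(\<Sum>u\<in>N. dist u v) > 0"
      using finN Nne vN by (intro sum_pos) auto
    have "\<gamma> * (\<Sum>u\<in>N. dist u v) < sqrt 2 * (\<Sum>u\<in>N. dist u v)"
    proof -
      have w2': "(\<Sum>e\<in>Ev. c e) = \<gamma> * (\<Sum>u\<in>N. dist u v)" using w2 P by simp
      show ?thesis using strict w1 w2' w3 w4 geom by linarith
    qed
    moreover have "sqrt 2 * (\<Sum>u\<in>N. dist u v) < \<gamma> * (\<Sum>u\<in>N. dist u v)"
      using assms(3) Ppos by (simp add: mult_strict_right_mono)
    ultimately show False by simp
  qed
  then show ?thesis using rhs by simp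
qed

end
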